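(* Let $a, b \ge 2$ be even integers, at least one of which is not divisible by four. Then $R_\mathrm{cyc}(M_a^\mathrm{nest}, M_b^\mathrm{nest}) = a + b - 2$.
   Context: All graphs are finite, simple and undirected, and a graph of order $n$ has vertex set $\{0,1,\ldots,n-1\}$; $K_n$ is the complete graph on $\{0,\ldots,n-1\}$. A $2$-edge-coloring of $K_n$ assigns each edge a color in $\{1,2\}$. For a graph $H$ and such a coloring, an embedding of $H$ in color $j$ is an injective map $\varphi\colon V(H)\to V(K_n)$ such that for every edge $uv$ of $H$ the edge $\{\varphi(u),\varphi(v)\}$ has color $j$; it is increasing up to a cyclic permutation if there exists $t\in V(H)$ such that $(\varphi(t),\ldots,\varphi(|H|-1),\varphi(0),\ldots,\varphi(t-1))$ is increasing. The cyclic Ramsey number $R_\mathrm{cyc}(H_1,H_2)$ is the smallest $n$ such that every $2$-edge-coloring of $K_n$ admits an embedding of $H_1$ in color $1$ or of $H_2$ in color $2$ that is increasing up to a cyclic permutation. For even $n\ge2$, the nested matching $M_n^\mathrm{nest}$ is the graph of order $n$ whose edges are $\{v,n-1-v\}$ for $0\le v\le n/2-1$. *)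

theory Defs
  imports Main
begin

text \<open>A graph of order h is given by its order h and an edge set E of 2-element
subsets of {0..<h}. A 2-edge-coloring of K_n is a function c on sets of naturals
that assigns to every edge (2-element subset of {0..<n}) a color in {1,2};
values on other sets are irrelevant.\<close>

definition two_coloring :: "nat \<Rightarrow> (nat set \<Rightarrow> nat) \<Rightarrow> bool" where
  "two_coloring n c \<longleftrightarrow> (\<forall>e. e \<subseteq> {0..<n} \<and> card e = 2 \<longrightarrow> c e \<in> {1, 2})"

definition embedding_in_color ::
  "nat \<Rightarrow> (nat set \<Rightarrow> nat) \<Rightarrow> nat \<Rightarrow> nat set set \<Rightarrow> nat \<Rightarrow> (nat \<Rightarrow> nat) \<Rightarrow> bool" where
  "embedding_in_color n c h E j \<phi> \<longleftrightarrow>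
     inj_on \<phi> {0..<h} \<and> \<phi> ` {0..<h} \<subseteq> {0..<n} \<and> (\<forall>e\<in>E. c (\<phi> ` e) = j)"

definition cyc_increasing :: "nat \<Rightarrow> (nat \<Rightarrow> nat) \<Rightarrow> bool" where
  "cyc_increasing h \<phi> \<longleftrightarrow> (\<exists>t<h. sorted_wrt (<) (map \<phi> ([t..<h] @ [0..<t])))"

definition cyc_arrows :: "nat \<Rightarrow> nat \<Rightarrow> nat set set \<Rightarrow> nat \<Rightarrow> nat set set \<Rightarrow> bool" where
  "cyc_arrows n h1 E1 h2 E2 \<longleftrightarrow>
     (\<forall>c. two_coloring n c \<longrightarrow>
        (\<exists>\<phi>. embedding_in_color n c h1 E1 1 \<phi> \<and> cyc_increasing h1 \<phi>) \<or>
        (\<exists>\<phi>. embedding_in_color n c h2 E2 2 \<phi> \<and> cyc_increasing h2 \<phi>))"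

definition R_cyc :: "nat \<Rightarrow> nat set set \<Rightarrow> nat \<Rightarrow> nat set set \<Rightarrow> nat" where
  "R_cyc h1 E1 h2 E2 = (LEAST n. cyc_arrows n h1 E1 h2 E2)"

definition nest_matching :: "nat \<Rightarrow> nat set set" where
  "nest_matching n = {{v, n - 1 - v} | v. v < n div 2}"

end

theory Submission
  imports Defs
begin

definition arc :: "nat \<Rightarrow> nat \<Rightarrow> nat \<Rightarrow> nat" where
  "arc n x y = (y + n - x) mod n"

definition cdist :: "nat \<Rightarrow> nat \<Rightarrow> nat \<Rightarrow> nat" where
  "cdist n x y = min (arc n x y) (arc n y x)"

lemma arc_eq: "x < n \<Longrightarrow> y < n \<Longrightarrow> arc n x y = (if x \<le> y then y - x else y + n - x)"
  unfolding arc_def by (auto simp: mod_if)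

lemma arc_add:
  assumes "x < n" "y < n" "z < n" "(x<y \<and> y<z) \<or> (y<z \<and> z<x) \<or> (z<x \<and> x<y)"
  shows "arc n x z = arc n x y + arc n y z"
  using assms by (auto simp: arc_eq)

lemma arc_pos: "x < n \<Longrightarrow> y < n \<Longrightarrow> x \<noteq> y \<Longrightarrow> 1 \<le> arc n x y \<and> arc n x y < n"
  by (auto simp: arc_eq)

lemma arc_swap: "x < n \<Longrightarrow> y < n \<Longrightarrow> x \<noteq> y \<Longrightarrow> arc n y x = n - arc n x y"
  by (auto simp: arc_eq)

lemma sorted_blocks:
  assumes s: "sorted_wrt (<) (map \<phi> ([t..<h] @ [0..<t]))" and th: "t < h"
  shows "t \<le> x \<Longrightarrow> x < y \<Longrightarrow> y < h \<Longrightarrow> \<phi> x < \<phi> y"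
    and "x < y \<Longrightarrow> y < t \<Longrightarrow> \<phi> x < \<phi> y"
    and "x < t \<Longrightarrow> t \<le> y \<Longrightarrow> y < h \<Longrightarrow> \<phi> y < \<phi> x"
proof -
  have s1: "sorted_wrt (\<lambda>x y. \<phi> x < \<phi> y) [t..<h]"
   and s2: "sorted_wrt (\<lambda>x y. \<phi> x < \<phi> y) [0..<t]"
   and s3: "\<forall>x\<in>set [t..<h]. \<forall>y\<in>set [0..<t]. \<phi> x < \<phi> y"
    using s by (auto simp: sorted_wrt_append sorted_wrt_map)
  show "t \<le> x \<Longrightarrow> x < y \<Longrightarrow> y < h \<Longrightarrow> \<phi> x < \<phi> y"
    using sorted_wrt_nth_less[OF s1, of "x - t" "y - t"] by auto
  show "x < y \<Longrightarrow> y < t \<Longrightarrow> \<phi> x < \<phi> y"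
    using sorted_wrt_nth_less[OF s2, of x y] by auto
  show "x < t \<Longrightarrow> t \<le> y \<Longrightarrow> y < h \<Longrightarrow> \<phi> y < \<phi> x"
    using s3 by auto
qed

lemma cyc_triple:
  assumes "cyc_increasing h \<phi>" "i < j" "j < k" "k < h"
  shows "(\<phi> i < \<phi> j \<and> \<phi> j < \<phi> k) \<or> (\<phi> j < \<phi> k \<and> \<phi> k < \<phi> i) \<or> (\<phi> k < \<phi> i \<and> \<phi> i < \<phi> j)"
proof -
  obtain t where th: "t < h" and s: "sorted_wrt (<) (map \<phi> ([t..<h] @ [0..<t]))"
    using assms(1) unfolding cyc_increasing_def by auto
  note B = sorted_blocks[OF s th]
  show ?thesis
  proof (cases "t \<le> i")
    case True then show ?thesis using B(1)[of i j] B(1)[of j k] assms by auto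
  next
    case F1: False
    show ?thesis
    proof (cases "t \<le> j")
      case True then show ?thesis using F1 B(1)[of j k] B(3)[of i k] assms by auto
    next
      case F2: False
      show ?thesis
      proof (cases "t \<le> k")
        case True then show ?thesis using F1 F2 B(2)[of i j] B(3)[of i k] assms by auto
      next
        case False then show ?thesis using F1 F2 B(2)[of i j] B(2)[of j k] assms by auto
      qed
    qed
  qed
qed

lemma arc_cyc_add:
  assumes "cyc_increasing h \<phi>" "inj_on \<phi> {0..<h}" "\<phi> ` {0..<h} \<subseteq> {0..<n}"
    "i < j" "j < k" "k < h"
  shows "arc n (\<phi> i) (\<phi> k) = arc n (\<phi> i) (\<phi> j) + arc n (\<phi> j) (\<phi> k)"
proof -
  have "\<phi> i < n" "\<phi> j < n" "\<phi> k < n" using assms(3-6) by (auto simp: image_subset_iff)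
  then show ?thesis using arc_add cyc_triple[OF assms(1,4,5,6)] by blast
qed

lemma desc_seq:
  assumes "\<forall>v. v + 1 < m \<longrightarrow> f (Suc v) + 2 \<le> (f v :: nat)" "i \<le> j" "j < m"
  shows "f j + 2 * (j - i) \<le> f i"
  using assms(2,3)
proof (induction j)
  case 0 then show ?case by simp
next
  case (Suc j)
  show ?case
  proof (cases "i = Suc j")
    case True then show ?thesis by simp
  next
    case False
    then have "i \<le> j" using Suc by simp
    then have "f j + 2 * (j - i) \<le> f i" using Suc by simp
    moreover have "f (Suc j) + 2 \<le> f j" using assms(1) Suc by simp
    ultimately show ?thesis using \<open>i \<le> j\<close> by (simp add: Suc_diff_le)
  qed
qed

lemma numB:
  fixes f :: "nat \<Rightarrow> nat"
  assumes "\<forall>v. v + 1 < m \<longrightarrow> f (Suc v) + 2 \<le> f v" "1 \<le> m" "n + 3 \<le> 2*L + 2*m"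
    "\<forall>v<m. L \<le> f v \<and> L + f v \<le> n"
  shows False
proof -
  have "f (m-1) + 2 * (m - 1 - 0) \<le> f 0" using desc_seq[OF assms(1), of 0 "m-1"] assms(2) by simp
  moreover have "L \<le> f (m-1)" "L + f 0 \<le> n" using assms(2,4) by auto
  ultimately show False using assms(3) by linarith
qed

lemma numA:
  fixes f :: "nat \<Rightarrow> nat"
  assumes dec: "\<forall>v. v + 1 < m \<longrightarrow> f (Suc v) + 2 \<le> f v" and ml: "m = 2*q+1"
    and bnd: "\<forall>v<m. 1 \<le> f v \<and> f v < n"
    and sm: "\<forall>v<m. f v \<le> 2*q \<or> n \<le> f v + 2*q"
  shows False
proof -
  define P where "P v \<longleftrightarrow> f v \<le> 2*q" for v
  define j where "j = (if \<exists>v<m. P v then LEAST v. v < m \<and> P v else m)"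
  have jm: "j \<le> m" unfolding j_def
    by (auto intro: Least_le[THEN order.trans] less_imp_le)
  have top: "n \<le> f v + 2*q" if "v < j" for v
  proof -
    have "v < m" using that jm by simp
    have "\<not> P v"
    proof
      assume "P v"
      then have "\<exists>v<m. P v" using \<open>v < m\<close> by blast
      then have "j \<le> v" unfolding j_def using \<open>P v\<close> \<open>v < m\<close> by (simp add: Least_le)
      then show False using that by simp
    qed
    then show ?thesis using sm \<open>v < m\<close> unfolding P_def by auto
  qed
  have bot: "f j \<le> 2*q" if "j < m"
  proof -
    have ex: "\<exists>v<m. P v" using that unfolding j_def by (auto split: if_splits)
    then have "j = (LEAST v. v < m \<and> P v)" unfolding j_def by simp
    then have "P j" using LeastI_ex[of "\<lambda>v. v < m \<and> P v"] ex by auto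
    then show ?thesis unfolding P_def .
  qed
  have c1: "j \<le> q"
  proof (cases "j = 0")
    case False
    have "f (j-1) + 2 * (j - 1 - 0) \<le> f 0" using desc_seq[OF dec, of 0 "j-1"] False jm by simp
    moreover have "n \<le> f (j-1) + 2*q" using top False by simp
    moreover have "f 0 < n" using bnd ml by simp
    ultimately show ?thesis by linarith
  qed simp
  have c2: "m - j \<le> q"
  proof (cases "j < m")
    case True
    have "f (m-1) + 2 * (m - 1 - j) \<le> f j" using desc_seq[OF dec, of j "m-1"] True by simp
    moreover have "f j \<le> 2*q" using bot True by simp
    moreover have "1 \<le> f (m-1)" using bnd ml by simp
    ultimately show ?thesis by linarith
  qed (use jm in simp)
  show False using c1 c2 ml jm by linarith
qed


lemma chord_facts:
  assumes cyc: "cyc_increasing h \<phi>" and inj: "inj_on \<phi> {0..<h}" and img: "\<phi> ` {0..<h} \<subseteq> {0..<n}"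
    and hm: "h = 2*m"
  shows "v + 1 < m \<Longrightarrow> arc n (\<phi> (Suc v)) (\<phi> (h-1-Suc v)) + 2 \<le> arc n (\<phi> v) (\<phi> (h-1-v))"
    and "v < m \<Longrightarrow> 1 \<le> arc n (\<phi> v) (\<phi> (h-1-v)) \<and> arc n (\<phi> v) (\<phi> (h-1-v)) < n"
    and "v < m \<Longrightarrow> cdist n (\<phi> v) (\<phi> (h-1-v)) = min (arc n (\<phi> v) (\<phi> (h-1-v))) (n - arc n (\<phi> v) (\<phi> (h-1-v)))"
proof -
  have lt: "\<phi> x < n" if "x < h" for x using img that by (auto simp: image_subset_iff)
  have ne: "\<phi> x \<noteq> \<phi> y" if "x < h" "y < h" "x \<noteq> y" for x y
    using inj_onD[OF inj, of x y] that by auto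
  have ap: "1 \<le> arc n (\<phi> x) (\<phi> y)" if "x < h" "y < h" "x \<noteq> y" for x y
    using arc_pos[OF lt[OF that(1)] lt[OF that(2)] ne[OF that]] by simp
  show "1 \<le> arc n (\<phi> v) (\<phi> (h-1-v)) \<and> arc n (\<phi> v) (\<phi> (h-1-v)) < n" if "v < m"
  proof -
    have h: "v < h" "h-1-v < h" "v \<noteq> h-1-v" using hm that by auto
    show ?thesis by (rule arc_pos[OF lt[OF h(1)] lt[OF h(2)] ne[OF h]])
  qed
  show "cdist n (\<phi> v) (\<phi> (h-1-v)) = min (arc n (\<phi> v) (\<phi> (h-1-v))) (n - arc n (\<phi> v) (\<phi> (h-1-v)))" if "v < m"
  proof -
    have h: "v < h" "h-1-v < h" "v \<noteq> h-1-v" using hm that by auto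
    show ?thesis unfolding cdist_def using arc_swap[OF lt[OF h(1)] lt[OF h(2)] ne[OF h]] by simp
  qed
  assume v: "v + 1 < m"
  have a1: "arc n (\<phi> v) (\<phi> (h-1-v)) = arc n (\<phi> v) (\<phi> (Suc v)) + arc n (\<phi> (Suc v)) (\<phi> (h-1-v))"
    by (rule arc_cyc_add[OF cyc inj img]) (use v hm in linarith)+
  have a2: "arc n (\<phi> (Suc v)) (\<phi> (h-1-v)) = arc n (\<phi> (Suc v)) (\<phi> (h-1-Suc v)) + arc n (\<phi> (h-1-Suc v)) (\<phi> (h-1-v))"
    by (rule arc_cyc_add[OF cyc inj img]) (use v hm in linarith)+
  have "1 \<le> arc n (\<phi> v) (\<phi> (Suc v))" by (rule ap) (use v hm in linarith)+
  moreover have "1 \<le> arc n (\<phi> (h-1-Suc v)) (\<phi> (h-1-v))" by (rule ap) (use v hm in linarith)+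
  ultimately show "arc n (\<phi> (Suc v)) (\<phi> (h-1-Suc v)) + 2 \<le> arc n (\<phi> v) (\<phi> (h-1-v))"
    using a1 a2 by linarith
qed


lemma no_large:
  assumes cyc: "cyc_increasing h \<phi>" and inj: "inj_on \<phi> {0..<h}" and img: "\<phi> ` {0..<h} \<subseteq> {0..<n}"
    and hm: "h = 2*m" and m1: "1 \<le> m" and nL: "n + 3 \<le> 2*L + 2*m"
    and big: "\<forall>v<m. L \<le> cdist n (\<phi> v) (\<phi> (h-1-v))"
  shows False
proof (rule numB[of m "\<lambda>v. arc n (\<phi> v) (\<phi> (h-1-v))" n L])
  note F = chord_facts[OF cyc inj img hm]
  show "\<forall>v. v + 1 < m \<longrightarrow> arc n (\<phi> (Suc v)) (\<phi> (h-1-Suc v)) + 2 \<le> arc n (\<phi> v) (\<phi> (h-1-v))"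
    using F(1) by blast
  show "\<forall>v<m. L \<le> arc n (\<phi> v) (\<phi> (h-1-v)) \<and> L + arc n (\<phi> v) (\<phi> (h-1-v)) \<le> n"
  proof (intro allI impI)
    fix v assume "v < m"
    then show "L \<le> arc n (\<phi> v) (\<phi> (h-1-v)) \<and> L + arc n (\<phi> v) (\<phi> (h-1-v)) \<le> n"
      proof -
      have "L \<le> min (arc n (\<phi> v) (\<phi> (h-1-v))) (n - arc n (\<phi> v) (\<phi> (h-1-v)))"
        using F(3)[of v] big \<open>v < m\<close> by metis
      then show ?thesis using F(2)[of v] \<open>v < m\<close> by linarith
    qed
  qed
qed (use m1 nL in auto)

lemma no_small:
  assumes cyc: "cyc_increasing h \<phi>" and inj: "inj_on \<phi> {0..<h}" and img: "\<phi> ` {0..<h} \<subseteq> {0..<n}"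
    and hm: "h = 2*m" and mq: "m = 2*q+1"
    and small: "\<forall>v<m. cdist n (\<phi> v) (\<phi> (h-1-v)) \<le> 2*q"
  shows False
proof (rule numA[of m "\<lambda>v. arc n (\<phi> v) (\<phi> (h-1-v))" q n])
  note F = chord_facts[OF cyc inj img hm]
  show "\<forall>v. v + 1 < m \<longrightarrow> arc n (\<phi> (Suc v)) (\<phi> (h-1-Suc v)) + 2 \<le> arc n (\<phi> v) (\<phi> (h-1-v))"
    using F(1) by blast
  show "\<forall>v<m. 1 \<le> arc n (\<phi> v) (\<phi> (h-1-v)) \<and> arc n (\<phi> v) (\<phi> (h-1-v)) < n"
    using F(2) by blast
  show "\<forall>v<m. arc n (\<phi> v) (\<phi> (h-1-v)) \<le> 2*q \<or> n \<le> arc n (\<phi> v) (\<phi> (h-1-v)) + 2*q"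
  proof (intro allI impI)
    fix v assume "v < m"
    then show "arc n (\<phi> v) (\<phi> (h-1-v)) \<le> 2*q \<or> n \<le> arc n (\<phi> v) (\<phi> (h-1-v)) + 2*q"
      proof -
      have "min (arc n (\<phi> v) (\<phi> (h-1-v))) (n - arc n (\<phi> v) (\<phi> (h-1-v))) \<le> 2*q"
        using F(3)[of v] small \<open>v < m\<close> by metis
      then show ?thesis using F(2)[of v] \<open>v < m\<close> by linarith
    qed
  qed
qed (use mq in auto)

definition colr :: "nat \<Rightarrow> nat \<Rightarrow> nat \<Rightarrow> nat \<Rightarrow> nat set \<Rightarrow> nat" where
  "colr n T cs cl e = (if cdist n (Min e) (Max e) \<le> T then cs else cl)"



lemma cdist_sym: "cdist n x y = cdist n y x"
  unfolding cdist_def by simp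

lemma colr_pair: "colr n T cs cl {x, y} = (if cdist n x y \<le> T then cs else cl)"
proof (cases "x \<le> y")
  case True
  then have "Min {x, y} = x" "Max {x, y} = y" by auto
  then show ?thesis unfolding colr_def by simp
next
  case False
  then have "Min {x, y} = y" "Max {x, y} = x" by auto
  then show ?thesis unfolding colr_def using cdist_sym by simp
qed

lemma emb_chords:
  assumes "embedding_in_color n c h (nest_matching h) j \<phi>" "h = 2*m"
  shows "\<forall>v<m. c {\<phi> v, \<phi> (h-1-v)} = j"
proof (intro allI impI)
  fix v assume "v < m"
  then have "{v, h-1-v} \<in> nest_matching h" unfolding nest_matching_def using assms(2) by auto
  then show "c {\<phi> v, \<phi> (h-1-v)} = j" using assms(1) unfolding embedding_in_color_def by auto
qed


lemma chords_embed:
  assumes n: "even n" and I: "I \<subseteq> {0..<n div 2}" and mI: "m \<le> card I" and m1: "1 \<le> m"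
  shows "\<exists>\<phi>. inj_on \<phi> {0..<2*m} \<and> \<phi> ` {0..<2*m} \<subseteq> {0..<n} \<and> cyc_increasing (2*m) \<phi>
           \<and> (\<forall>e\<in>nest_matching (2*m). \<exists>i\<in>I. \<phi> ` e = {i, n-1-i})"
proof -
  have fin: "finite I" using I finite_subset by blast
  define xs where "xs = sorted_list_of_set I"
  have len: "length xs = card I" unfolding xs_def by simp
  have sx: "sorted_wrt (<) xs" unfolding xs_def by simp
  have setx: "set xs = I" unfolding xs_def using fin by simp
  have xI: "xs ! i \<in> I" if "i < m" for i using that mI len setx nth_mem by fastforce
  have xlt: "xs ! i < n div 2" if "i < m" for i using xI[OF that] I by auto
  have xmono: "xs ! i < xs ! j" if "i < j" "j < m" for i j
    using sorted_wrt_nth_less[OF sx that(1)] that mI len by simp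
  define \<phi> where "\<phi> v = (if v < m then xs ! v else n - 1 - xs ! (2*m-1-v))" for v
  have mono: "\<phi> i < \<phi> j" if "i < j" "j < 2*m" for i j
  proof (cases "j < m")
    case True then show ?thesis using xmono[of i j] that unfolding \<phi>_def by simp
  next
    case F: False
    show ?thesis
    proof (cases "i < m")
      case True
      have "xs ! i < n div 2" "xs ! (2*m-1-j) < n div 2" using xlt True that F by auto
      then show ?thesis using True F n unfolding \<phi>_def by auto
    next
      case False
      have "xs ! (2*m-1-j) < xs ! (2*m-1-i)" using xmono[of "2*m-1-j" "2*m-1-i"] that False by simp
      moreover have "xs ! (2*m-1-i) < n div 2" using xlt that False by simp
      ultimately show ?thesis using False F unfolding \<phi>_def by simp
    qed
  qed
  have "inj_on \<phi> {0..<2*m}"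
  proof (rule inj_onI)
    fix x y assume "x \<in> {0..<2*m}" "y \<in> {0..<2*m}" "\<phi> x = \<phi> y"
    then show "x = y" using mono[of x y] mono[of y x] by (cases x y rule: linorder_cases) auto
  qed
  moreover have "\<phi> ` {0..<2*m} \<subseteq> {0..<n}"
  proof
    fix y assume "y \<in> \<phi> ` {0..<2*m}"
    then obtain v where v: "v < 2*m" "y = \<phi> v" by auto
    have "0 < n div 2" using xlt[of 0] m1 by simp
    then show "y \<in> {0..<n}" using v xlt[of v] unfolding \<phi>_def by auto
  qed
  moreover have "cyc_increasing (2*m) \<phi>"
    unfolding cyc_increasing_def
  proof (intro exI conjI)
    show "0 < 2*m" using m1 by simp
    show "sorted_wrt (<) (map \<phi> ([0..<2*m] @ [0..<0]))"
      by (auto simp: sorted_wrt_iff_nth_less intro: mono)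
  qed
  moreover have "\<forall>e\<in>nest_matching (2*m). \<exists>i\<in>I. \<phi> ` e = {i, n-1-i}"
  proof
    fix e assume "e \<in> nest_matching (2*m)"
    then obtain v where v: "v < m" "e = {v, 2*m-1-v}" unfolding nest_matching_def by auto
    have "\<phi> ` e = {xs ! v, n - 1 - xs ! v}" using v unfolding \<phi>_def by auto
    then show "\<exists>i\<in>I. \<phi> ` e = {i, n-1-i}" using xI[OF v(1)] by blast
  qed
  ultimately show ?thesis by blast
qed


lemma upper:
  assumes "even a" "even b" "2 \<le> a" "2 \<le> b"
  shows "cyc_arrows (a+b-2) a (nest_matching a) b (nest_matching b)"
  unfolding cyc_arrows_def
proof (intro allI impI)
  fix c assume col: "two_coloring (a+b-2) c"
  define n where "n = a + b - 2"
  obtain k l where k: "a = 2*k" and l: "b = 2*l" using assms by (auto elim!: evenE)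
  have k1: "1 \<le> k" and l1: "1 \<le> l" using assms k l by auto
  have nd: "n div 2 = k + l - 1" "even n" using k l k1 l1 unfolding n_def by auto
  define I1 where "I1 = {i\<in>{0..<n div 2}. c {i, n-1-i} = 1}"
  define I2 where "I2 = {i\<in>{0..<n div 2}. c {i, n-1-i} \<noteq> 1}"
  have "card I1 + card I2 = card (I1 \<union> I2)"
    by (rule card_Un_disjoint[symmetric]) (auto simp: I1_def I2_def)
  also have "I1 \<union> I2 = {0..<n div 2}" unfolding I1_def I2_def by auto
  finally have cs: "card I1 + card I2 = k + l - 1" using nd by simp
  have c2: "c {i, n-1-i} = 2" if "i \<in> I2" for i
  proof -
    have "i < n div 2" "c {i, n-1-i} \<noteq> 1" using that unfolding I2_def by auto
    moreover have "{i, n-1-i} \<subseteq> {0..<n}" "card {i, n-1-i} = 2" using \<open>i < n div 2\<close> nd by auto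
    ultimately have "c {i, n-1-i} \<in> {1, 2}" using col unfolding two_coloring_def n_def by blast
    then show ?thesis using \<open>c {i, n-1-i} \<noteq> 1\<close> by auto
  qed
  show "(\<exists>\<phi>. embedding_in_color (a+b-2) c a (nest_matching a) 1 \<phi> \<and> cyc_increasing a \<phi>) \<or>
        (\<exists>\<phi>. embedding_in_color (a+b-2) c b (nest_matching b) 2 \<phi> \<and> cyc_increasing b \<phi>)"
  proof (cases "k \<le> card I1")
    case True
    obtain \<phi> where p: "inj_on \<phi> {0..<2*k}" "\<phi> ` {0..<2*k} \<subseteq> {0..<n}" "cyc_increasing (2*k) \<phi>"
      "\<forall>e\<in>nest_matching (2*k). \<exists>i\<in>I1. \<phi> ` e = {i, n-1-i}"
      using chords_embed[OF nd(2) _ True k1, of ] unfolding I1_def by blast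
    have "\<forall>e\<in>nest_matching a. c (\<phi> ` e) = 1"
    proof
      fix e assume "e \<in> nest_matching a"
      then obtain i where "i \<in> I1" "\<phi> ` e = {i, n-1-i}" using p(4) k by auto
      then show "c (\<phi> ` e) = 1" unfolding I1_def by auto
    qed
    then show ?thesis using p k unfolding embedding_in_color_def n_def by blast
  next
    case False
    then have L: "l \<le> card I2" using cs by linarith
    obtain \<phi> where p: "inj_on \<phi> {0..<2*l}" "\<phi> ` {0..<2*l} \<subseteq> {0..<n}" "cyc_increasing (2*l) \<phi>"
      "\<forall>e\<in>nest_matching (2*l). \<exists>i\<in>I2. \<phi> ` e = {i, n-1-i}"
      using chords_embed[OF nd(2) _ L l1, of ] unfolding I2_def by blast
    have "\<forall>e\<in>nest_matching b. c (\<phi> ` e) = 2"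
    proof
      fix e assume "e \<in> nest_matching b"
      then obtain i where "i \<in> I2" "\<phi> ` e = {i, n-1-i}" using p(4) l by auto
      then show "c (\<phi> ` e) = 2" using c2 by auto
    qed
    then show ?thesis using p l unfolding embedding_in_color_def n_def by blast
  qed
qed

lemma arrows_mono:
  assumes "\<not> cyc_arrows N h1 E1 h2 E2" "n \<le> N"
  shows "\<not> cyc_arrows n h1 E1 h2 E2"
proof
  assume A: "cyc_arrows n h1 E1 h2 E2"
  obtain c where c: "two_coloring N c"
    and no1: "\<not> (\<exists>\<phi>. embedding_in_color N c h1 E1 1 \<phi> \<and> cyc_increasing h1 \<phi>)"
    and no2: "\<not> (\<exists>\<phi>. embedding_in_color N c h2 E2 2 \<phi> \<and> cyc_increasing h2 \<phi>)"
    using assms(1) unfolding cyc_arrows_def by blast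
  have "two_coloring n c" unfolding two_coloring_def
  proof (intro allI impI)
    fix e assume "e \<subseteq> {0..<n} \<and> card e = 2"
    then have "e \<subseteq> {0..<N} \<and> card e = 2" using assms(2) by auto
    then show "c e \<in> {1, 2}" using c unfolding two_coloring_def by blast
  qed
  then have "(\<exists>\<phi>. embedding_in_color n c h1 E1 1 \<phi> \<and> cyc_increasing h1 \<phi>) \<or>
        (\<exists>\<phi>. embedding_in_color n c h2 E2 2 \<phi> \<and> cyc_increasing h2 \<phi>)"
    using A unfolding cyc_arrows_def by blast
  moreover have "embedding_in_color N c h j E \<phi>" if "embedding_in_color n c h j E \<phi>" for h j E \<phi>
    using that assms(2) unfolding embedding_in_color_def by auto
  ultimately show False using no1 no2 by blast
qed


lemma emb_large:
  assumes e: "embedding_in_color N (colr N T cs cl) h (nest_matching h) cl \<phi>" and d: "cs \<noteq> cl"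
    and hm: "h = 2*m" and m1: "1 \<le> m" and NT: "N + 3 \<le> 2*(T+1) + 2*m" and cy: "cyc_increasing h \<phi>"
  shows False
proof (rule no_large[OF cy _ _ hm m1 NT])
  show "inj_on \<phi> {0..<h}" "\<phi> ` {0..<h} \<subseteq> {0..<N}" using e unfolding embedding_in_color_def by auto
  have ch: "\<forall>v<m. colr N T cs cl {\<phi> v, \<phi> (h-1-v)} = cl" by (rule emb_chords[OF e hm])
  show "\<forall>v<m. T + 1 \<le> cdist N (\<phi> v) (\<phi> (h-1-v))"
  proof (intro allI impI)
    fix v assume "v < m"
    then have "colr N T cs cl {\<phi> v, \<phi> (h-1-v)} = cl" using ch by blast
    then have "\<not> cdist N (\<phi> v) (\<phi> (h-1-v)) \<le> T" using d unfolding colr_pair by (auto split: if_splits)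
    then show "T + 1 \<le> cdist N (\<phi> v) (\<phi> (h-1-v))" by simp
  qed
qed

lemma emb_small:
  assumes e: "embedding_in_color N (colr N (2*q) cs cl) h (nest_matching h) cs \<phi>" and d: "cs \<noteq> cl"
    and hm: "h = 2*m" and mq: "m = 2*q+1" and cy: "cyc_increasing h \<phi>"
  shows False
proof (rule no_small[OF cy _ _ hm mq])
  show "inj_on \<phi> {0..<h}" "\<phi> ` {0..<h} \<subseteq> {0..<N}" using e unfolding embedding_in_color_def by auto
  have ch: "\<forall>v<m. colr N (2*q) cs cl {\<phi> v, \<phi> (h-1-v)} = cs" by (rule emb_chords[OF e hm])
  show "\<forall>v<m. cdist N (\<phi> v) (\<phi> (h-1-v)) \<le> 2*q"
  proof (intro allI impI)
    fix v assume "v < m"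
    then have "colr N (2*q) cs cl {\<phi> v, \<phi> (h-1-v)} = cs" using ch by blast
    then show "cdist N (\<phi> v) (\<phi> (h-1-v)) \<le> 2*q" using d unfolding colr_pair by (auto split: if_splits)
  qed
qed

lemma colr_two: "cs \<in> {1,2} \<Longrightarrow> cl \<in> {1,2} \<Longrightarrow> two_coloring N (colr N T cs cl)"
  unfolding two_coloring_def colr_def by auto

lemma lower:
  assumes "even a" "even b" "2 \<le> a" "2 \<le> b" "\<not> (4 dvd a) \<or> \<not> (4 dvd b)"
  shows "\<not> cyc_arrows (a+b-3) a (nest_matching a) b (nest_matching b)"
proof -
  obtain k l where k: "a = 2*k" and l: "b = 2*l" using assms by (auto elim!: evenE)
  have k1: "1 \<le> k" and l1: "1 \<le> l" using assms k l by auto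
  define N where "N = a + b - 3"
  have odd: "odd k \<or> odd l" using assms(5) k l by auto
  show ?thesis
  proof (cases "odd l")
    case True
    then obtain q where q: "l = 2*q+1" by (auto elim!: oddE)
    define c where "c = colr N (2*q) 2 1"
    have "two_coloring N c" unfolding c_def by (rule colr_two) auto
    moreover have "\<not> (embedding_in_color N c a (nest_matching a) 1 \<phi> \<and> cyc_increasing a \<phi>)" for \<phi>
      using emb_large[of N "2*q" 2 1 a \<phi> k] k k1 q l unfolding c_def N_def by auto
    moreover have "\<not> (embedding_in_color N c b (nest_matching b) 2 \<phi> \<and> cyc_increasing b \<phi>)" for \<phi>
      using emb_small[of N q 2 1 b \<phi> l] l q unfolding c_def by auto
    ultimately show ?thesis unfolding cyc_arrows_def N_def by blast
  next
    case False
    then have "odd k" using odd by simp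
    then obtain q where q: "k = 2*q+1" by (auto elim!: oddE)
    define c where "c = colr N (2*q) 1 2"
    have "two_coloring N c" unfolding c_def by (rule colr_two) auto
    moreover have "\<not> (embedding_in_color N c a (nest_matching a) 1 \<phi> \<and> cyc_increasing a \<phi>)" for \<phi>
      using emb_small[of N q 1 2 a \<phi> k] k q unfolding c_def by auto
    moreover have "\<not> (embedding_in_color N c b (nest_matching b) 2 \<phi> \<and> cyc_increasing b \<phi>)" for \<phi>
      using emb_large[of N "2*q" 1 2 b \<phi> l] l l1 q k unfolding c_def N_def by auto
    ultimately show ?thesis unfolding cyc_arrows_def N_def by blast
  qed
qed

theorem theorem4p29:
  fixes a b :: nat
  assumes "even a" and "even b" and "a \<ge> 2" and "b \<ge> 2"
    and "\<not> (4 dvd a) \<or> \<not> (4 dvd b)"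
  shows "R_cyc a (nest_matching a) b (nest_matching b) = a + b - 2"
  unfolding R_cyc_def
proof (rule Least_equality)
  show "cyc_arrows (a+b-2) a (nest_matching a) b (nest_matching b)"
    using upper assms by blast
  fix y assume y: "cyc_arrows y a (nest_matching a) b (nest_matching b)"
  show "a + b - 2 \<le> y"
  proof (rule ccontr)
    assume "\<not> a + b - 2 \<le> y"
    then have "y \<le> a + b - 3" by simp
    then have "\<not> cyc_arrows y a (nest_matching a) b (nest_matching b)"
      using arrows_mono[OF lower[OF assms]] by blast
    then show False using y by simp
  qed
qed

end
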